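(* Let $b\ge 2$ be an integer and $d\in\{0,1,\dots,b-1\}$. For $i\ge1$ put $\gamma_i=\sum_{0\le a<b,\ a\ne d}a^i$. Define $u_{0;0}=b$ and, for $m\ge1$, define $u_{0;m}$ recursively by $$(b^{m+1}-b+1)\,u_{0;m}=\sum_{i=1}^{m}\binom{m}{i}\gamma_i\,u_{0;m-i}.$$ For $j\ge1$ and $m\ge0$ define $u_{j;m}$ recursively by $$(b^{m+1}-b+1)\,u_{j;m}=\sum_{i=1}^{m}\binom{m}{i}\gamma_i\,u_{j;m-i}+\sum_{i=0}^{m}\binom{m}{i}d^i\,u_{j-1;m-i}$$ (with the convention $0^0=1$). In particular $u_{j;0}=b$ for all $j\ge0$. Then for every $k\ge0$ and every $l\ge1$, $$H^{(k)}=\sum_{\substack{0<n<b^{l-1}\\ k(n)=k}}\frac1n\;+\;b\sum_{\substack{b^{l-1}\le n<b^{l}\\ k(n)\le k}}\frac1n\;+\;\sum_{m=1}^{\infty}(-1)^m\sum_{\substack{b^{l-1}\le n<b^{l}\\ k(n)\le k}}\frac{u_{k-k(n);m}}{n^{m+1}}.$$ Moreover, the numbers $u_{j;m}$ ($j\ge0$, $m\ge1$) satisfy: (i) $u_{j;m}\ge0$, with $u_{j;m}=0$ only if $j=0$, $b=2$ and $d=1$; (ii) for all $j\ge 0$, $m\ge0$: $u_{j;m+1}\le u_{j;m}$, with strict inequality unless both are $0$; (iii) for each fixed $m\ge1$, the sequence $(u_{j;m})_{j\ge0}$ is strictly increasing and converges to $b/(m+1)$.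
   Context: For an integer $n\ge0$, its (minimal) base-$b$ representation is the string of base-$b$ digits of $n$ without leading zeros (the empty string for $n=0$); $k(n)$ denotes the number of occurrences of the digit $d$ in this representation. For $k\ge0$, the Irwin sum is $H^{(k)}=\sum_{n\ge1,\ k(n)=k}1/n$ (a convergent series of positive terms; it equals $0$ when $b=2$, $d=1$, $k=0$, the series being empty). *)

theory Defs
  imports Complex_Main
begin

fun digit_count :: "nat \<Rightarrow> nat \<Rightarrow> nat \<Rightarrow> nat" where
  "digit_count b d n =
     (if n = 0 \<or> b < 2 then 0
      else (if n mod b = d then 1 else 0) + digit_count b d (n div b))"

definition irwin_sum :: "nat \<Rightarrow> nat \<Rightarrow> nat \<Rightarrow> real" where
  "irwin_sum b d k = (\<Sum>n. if 1 \<le> n \<and> digit_count b d n = k then 1 / real n else 0)"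

definition gamma_pow :: "nat \<Rightarrow> nat \<Rightarrow> nat \<Rightarrow> real" where
  "gamma_pow b d i = (\<Sum>a\<in>{a. a < b \<and> a \<noteq> d}. real a ^ i)"

function u_coef :: "nat \<Rightarrow> nat \<Rightarrow> nat \<Rightarrow> nat \<Rightarrow> real" where
  "u_coef b d j m =
     (if j = 0 \<and> m = 0 then real b
      else ((\<Sum>i=1..m. real (m choose i) * gamma_pow b d i * u_coef b d j (m - i))
            + (if j = 0 then 0
               else (\<Sum>i=0..m. real (m choose i) * real d ^ i * u_coef b d (j - 1) (m - i))))
           / (real b ^ (m + 1) - real b + 1))"
  by pat_completeness auto
termination
  by (relation "measures [\<lambda>(b,d,j,m). j, \<lambda>(b,d,j,m). m]") auto

end

theory Submission
  imports Defs "HOL-Analysis.Analysis"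
begin

declare u_coef.simps[simp del]

fun pc :: "nat \<Rightarrow> nat \<Rightarrow> nat \<Rightarrow> nat \<Rightarrow> nat" where
  "pc b d 0 t = 0"
| "pc b d (Suc r) t = (if t mod b = d then 1 else 0) + pc b d r (t div b)"

lemma sum_group_mult:
  fixes g :: "nat \<Rightarrow> 'a::comm_monoid_add"
  shows "(\<Sum>t<n*k. g t) = (\<Sum>a<n. \<Sum>s<k. g (a*k + s))"
proof -
  have "(\<Sum>t<n*k. g t) = (\<Sum>a<n. \<Sum>t\<in>{a*k..<a*k+k}. g t)"
    by (rule sum.nat_group[symmetric])
  also have "\<dots> = (\<Sum>a<n. \<Sum>s<k. g (a*k + s))"
  proof (rule sum.cong[OF refl])
    fix a
    have "(\<Sum>t\<in>{0+a*k..<k+a*k}. g t) = (\<Sum>s\<in>{0..<k}. g (s + a*k))"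
      by (rule sum.shift_bounds_nat_ivl)
    then show "(\<Sum>t\<in>{a*k..<a*k+k}. g t) = (\<Sum>s<k. g (a*k + s))"
      by (simp add: atLeast0LessThan add.commute)
  qed
  finally show ?thesis .
qed

locale irw =
  fixes b d :: nat
  assumes b2: "2 \<le> b" and db: "d < b"
begin

lemma bpos: "0 < b" using b2 by simp

lemma pc_lead:
  assumes "a < b" "t < b ^ r"
  shows "pc b d (Suc r) (a * b ^ r + t) = (if a = d then 1 else 0) + pc b d r t"
  using assms(2)
proof (induction r arbitrary: t)
  case 0
  then show ?case using assms(1) by simp
next
  case (Suc r)
  have e: "a * b ^ Suc r + t = t + (a * b ^ r) * b" by (simp add: algebra_simps)
  have m: "(a * b ^ Suc r + t) mod b = t mod b"
    unfolding e by (rule mod_mult_self1)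
  have dv: "(a * b ^ Suc r + t) div b = a * b ^ r + t div b"
    unfolding e using bpos by simp
  have "t div b < b ^ r" using Suc.prems bpos
    by (simp add: div_less_iff_less_mult mult.commute)
  then show ?case
    using Suc.IH[of "t div b"] by (simp only: pc.simps m dv)
qed

lemma D_pos: "real b ^ (m+1) - real b + 1 > 0"
proof -
  have "real b ^ m \<ge> 1" using b2 by (simp add: one_le_power)
  then have "real b ^ (m+1) \<ge> real b" using b2
    by (simp add: mult_le_cancel_left1)
  then show ?thesis by simp
qed

lemma u_rec:
  assumes "\<not> (j = 0 \<and> m = 0)"
  shows "u_coef b d j m * (real b ^ (m+1) - real b + 1) =
     (\<Sum>i=1..m. real (m choose i) * gamma_pow b d i * u_coef b d j (m - i))
            + (if j = 0 then 0
               else (\<Sum>i=0..m. real (m choose i) * real d ^ i * u_coef b d (j - 1) (m - i)))"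
  using u_coef.simps[of b d j m] assms D_pos[of m] by simp

lemma u_j0: "u_coef b d j 0 = real b"
proof (induction j)
  case 0
  then show ?case by (simp add: u_coef.simps)
next
  case (Suc j)
  then show ?case by (subst u_coef.simps) simp
qed

lemma gamma_nonneg: "0 \<le> gamma_pow b d i"
  unfolding gamma_pow_def by (rule sum_nonneg) simp

lemma u_nonneg: "0 \<le> u_coef b d j m"
proof (induction j arbitrary: m)
  case 0
  show ?case
  proof (induction m rule: less_induct)
    case (less m)
    show ?case
      using D_pos[of m] less gamma_nonneg
      by (subst u_coef.simps) (auto intro!: divide_nonneg_pos sum_nonneg mult_nonneg_nonneg)
  qed
next
  case (Suc j)
  show ?case
  proof (induction m rule: less_induct)
    case (less m)
    show ?case
      using D_pos[of m] less gamma_nonneg Suc.IH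
      by (subst u_coef.simps) (auto intro!: divide_nonneg_pos sum_nonneg mult_nonneg_nonneg add_nonneg_nonneg)
  qed
qed


definition V :: "(nat \<Rightarrow> nat \<Rightarrow> real) \<Rightarrow> nat \<Rightarrow> nat \<Rightarrow> nat \<Rightarrow> real" where
  "V X j a k = (if a = d then (if j = 0 then 0 else X (j - 1) k) else X j k)"

definition Erec :: "(nat \<Rightarrow> nat \<Rightarrow> real) \<Rightarrow> bool" where
  "Erec X \<longleftrightarrow> (\<forall>j m. real b ^ (m+1) * X j m =
     (if j = 0 \<and> m = 0 then real b ^ (m+1) else 0) +
     (\<Sum>a<b. \<Sum>i\<le>m. real (m choose i) * real a ^ i * V X j a (m - i)))"

lemma set_nd: "{a. a < b \<and> a \<noteq> d} = {..<b} - {d}" by auto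

lemma gamma0: "gamma_pow b d 0 = real b - 1"
proof -
  have "card {a. a < b \<and> a \<noteq> d} = b - 1"
    unfolding set_nd using db by (simp add: card_Diff_singleton)
  then show ?thesis unfolding gamma_pow_def using db by simp
qed

lemma sum_a_split:
  "(\<Sum>a<b. if a = d then A else B a) = A + (\<Sum>a\<in>{a. a < b \<and> a \<noteq> d}. (B a :: real))"
proof -
  have "(\<Sum>a<b. if a = d then A else B a) = (if d = d then A else B d) + (\<Sum>a\<in>{..<b} - {d}. if a = d then A else B a)"
    using db by (intro sum.remove) auto
  also have "(\<Sum>a\<in>{..<b} - {d}. if a = d then A else B a) = (\<Sum>a\<in>{..<b} - {d}. B a)"
    by (rule sum.cong) auto
  finally show ?thesis unfolding set_nd by simp
qed

lemma inner_sum: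
  "(\<Sum>a<b. real a ^ i * V X j a k) = gamma_pow b d i * X j k + (if j = 0 then 0 else real d ^ i * X (j-1) k)"
proof -
  have "(\<Sum>a<b. real a ^ i * V X j a k) = (\<Sum>a<b. if a = d then (if j = 0 then 0 else real d ^ i * X (j-1) k) else real a ^ i * X j k)"
    unfolding V_def by (rule sum.cong) auto
  also have "\<dots> = (if j = 0 then 0 else real d ^ i * X (j-1) k) + (\<Sum>a\<in>{a. a < b \<and> a \<noteq> d}. real a ^ i * X j k)"
    by (rule sum_a_split)
  also have "(\<Sum>a\<in>{a. a < b \<and> a \<noteq> d}. real a ^ i * X j k) = gamma_pow b d i * X j k"
    unfolding gamma_pow_def by (simp add: sum_distrib_right)
  finally show ?thesis by simp
qed

lemma double_sum:
  "(\<Sum>a<b. \<Sum>i\<le>m. real (m choose i) * real a ^ i * V X j a (m - i)) =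
   (\<Sum>i\<le>m. real (m choose i) * gamma_pow b d i * X j (m - i)) +
   (if j = 0 then 0 else (\<Sum>i\<le>m. real (m choose i) * real d ^ i * X (j-1) (m - i)))"
proof -
  have "(\<Sum>a<b. \<Sum>i\<le>m. real (m choose i) * real a ^ i * V X j a (m - i)) =
        (\<Sum>i\<le>m. real (m choose i) * (\<Sum>a<b. real a ^ i * V X j a (m - i)))"
    by (subst sum.swap) (simp add: sum_distrib_left mult.assoc)
  also have "\<dots> = (\<Sum>i\<le>m. real (m choose i) * gamma_pow b d i * X j (m - i) +
       (if j = 0 then 0 else real (m choose i) * real d ^ i * X (j-1) (m - i)))"
    unfolding inner_sum by (rule sum.cong) (auto simp: algebra_simps)
  also have "\<dots> = (\<Sum>i\<le>m. real (m choose i) * gamma_pow b d i * X j (m - i)) +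
   (if j = 0 then 0 else (\<Sum>i\<le>m. real (m choose i) * real d ^ i * X (j-1) (m - i)))"
    by (simp add: sum.distrib)
  finally show ?thesis .
qed

lemma split0: "(\<Sum>i\<le>(m::nat). f i) = f 0 + (\<Sum>i=1..m. (f i :: real))"
proof -
  have "{..m} = insert 0 {1..m}" by auto
  then show ?thesis by (simp del: insert_iff)
qed

lemma E_u: "Erec (u_coef b d)"
  unfolding Erec_def
proof (intro allI)
  fix j m
  show "real b ^ (m+1) * u_coef b d j m =
     (if j = 0 \<and> m = 0 then real b ^ (m+1) else 0) +
     (\<Sum>a<b. \<Sum>i\<le>m. real (m choose i) * real a ^ i * V (u_coef b d) j a (m - i))"
  proof (cases "j = 0 \<and> m = 0")
    case True
    then show ?thesis using u_j0[of 0] unfolding double_sum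
      by (simp add: gamma0 algebra_simps)
  next
    case False
    have "(\<Sum>a<b. \<Sum>i\<le>m. real (m choose i) * real a ^ i * V (u_coef b d) j a (m - i))
       = (real b - 1) * u_coef b d j m + (\<Sum>i=1..m. real (m choose i) * gamma_pow b d i * u_coef b d j (m - i))
          + (if j = 0 then 0 else (\<Sum>i=0..m. real (m choose i) * real d ^ i * u_coef b d (j-1) (m - i)))"
      unfolding double_sum split0[where f="\<lambda>i. real (m choose i) * gamma_pow b d i * u_coef b d j (m - i)"]
      by (simp add: gamma0 atLeast0AtMost)
    also have "\<dots> = (real b - 1) * u_coef b d j m + u_coef b d j m * (real b ^ (m+1) - real b + 1)"
      using u_rec[OF False] by simp
    finally have "(\<Sum>a<b. \<Sum>i\<le>m. real (m choose i) * real a ^ i * V (u_coef b d) j a (m - i)) = real b ^ (m+1) * u_coef b d j m"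
      by (simp add: algebra_simps)
    then show ?thesis by (simp only: if_not_P[OF False])
  qed
qed

lemma Erec_unique:
  assumes X: "Erec X" and Y: "Erec Y"
  shows "X j m = Y j m"
proof (induction j arbitrary: m rule: less_induct)
  case (less j)
  note IHj = less.IH
  show ?case
  proof (induction m rule: less_induct)
    case (less m)
    note IHm = less
    have eqs: "(\<Sum>i\<le>m. real (m choose i) * real a ^ i * (V X j a (m - i) - V Y j a (m - i)))
         = (if a = d then 0 else X j m - Y j m)" for a
    proof -
      have "(\<Sum>i\<le>m. real (m choose i) * real a ^ i * (V X j a (m - i) - V Y j a (m - i)))
          = (\<Sum>i\<le>m. if i = 0 then (if a = d then 0 else X j m - Y j m) else 0)"
      proof (rule sum.cong[OF refl])
        fix i assume "i \<in> {..m}"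
        show "real (m choose i) * real a ^ i * (V X j a (m - i) - V Y j a (m - i))
           = (if i = 0 then (if a = d then 0 else X j m - Y j m) else 0)"
        proof (cases "i = 0")
          case True
          have "V X j a m - V Y j a m = (if a = d then 0 else X j m - Y j m)"
            unfolding V_def using IHj[of "j-1" m] by (cases "j = 0") auto
          then show ?thesis using True by simp
        next
          case False
          then have "m - i < m" using \<open>i \<in> {..m}\<close> by auto
          then have "V X j a (m - i) = V Y j a (m - i)"
            unfolding V_def using IHj[of "j-1" "m-i"] IHm[of "m - i"] by (cases "j = 0") auto
          then show ?thesis using False by simp
        qed
      qed
      then show ?thesis by simp
    qed
    have "real b ^ (m+1) * (X j m - Y j m)
       = (\<Sum>a<b. \<Sum>i\<le>m. real (m choose i) * real a ^ i * (V X j a (m - i) - V Y j a (m - i)))"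
    proof -
      have x: "real b ^ (m+1) * X j m = (if j = 0 \<and> m = 0 then real b ^ (m+1) else 0) +
         (\<Sum>a<b. \<Sum>i\<le>m. real (m choose i) * real a ^ i * V X j a (m - i))"
        using X unfolding Erec_def by blast
      have y: "real b ^ (m+1) * Y j m = (if j = 0 \<and> m = 0 then real b ^ (m+1) else 0) +
         (\<Sum>a<b. \<Sum>i\<le>m. real (m choose i) * real a ^ i * V Y j a (m - i))"
        using Y unfolding Erec_def by blast
      show ?thesis unfolding right_diff_distrib x y
        by (simp add: sum_subtractf[symmetric] right_diff_distrib)
    qed
    also have "\<dots> = (\<Sum>a<b. if a = d then 0 else X j m - Y j m)"
      using eqs by simp
    also have "\<dots> = (real b - 1) * (X j m - Y j m)"
      unfolding sum_a_split using gamma0 unfolding gamma_pow_def by simp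
    finally have e: "real b ^ (m+1) * (X j m - Y j m) = (real b - 1) * (X j m - Y j m)" .
    have "real b ^ (m+1) - (real b - 1) > 0" using D_pos[of m] by simp
    then have "(real b ^ (m+1) - (real b - 1)) * (X j m - Y j m) = 0" using e
      by (simp add: left_diff_distrib)
    then show ?case using \<open>real b ^ (m+1) - (real b - 1) > 0\<close> by simp
  qed
qed


definition F :: "nat \<Rightarrow> nat \<Rightarrow> nat \<Rightarrow> real" where
  "F j m r = (\<Sum>t<b^r. if pc b d r t = j then (real t / real b ^ r) ^ m / real b ^ r else 0)"

lemma F_nonneg: "0 \<le> F j m r"
  unfolding F_def by (auto intro!: sum_nonneg)

lemma F_0: "F j m 0 = (if j = 0 \<and> m = 0 then 1 else 0)"
proof -
  have "F j m 0 = (\<Sum>t\<in>{0::nat}. if pc b d 0 t = j then (real t / 1) ^ m / 1 else 0)"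
    unfolding F_def by (intro sum.cong) auto
  then show ?thesis by simp
qed

lemma V_F: "V (\<lambda>j m. F j m r) j a k = (\<Sum>t<b^r. if (if a = d then 1 else 0) + pc b d r t = j then (real t / real b ^ r) ^ k / real b ^ r else 0)"
  unfolding V_def F_def by (auto intro!: sum.cong)

lemma V_sum: "V (\<lambda>j m. \<Sum>r\<in>S. X r j m) j a k = (\<Sum>r\<in>S. V (X r) j a k)"
  by (simp add: V_def)

lemma V_mono: "(\<And>j m. X j m \<le> Y j m) \<Longrightarrow> V X j a k \<le> V Y j a k"
  by (simp add: V_def)

lemma layer_point:
  fixes a s r :: nat and c :: bool
  defines "q \<equiv> real s / real b ^ r"
  shows "(if c then (real (a * b ^ r + s) / real b ^ Suc r) ^ m / real b ^ Suc r else 0)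
    = (\<Sum>i\<le>m. real (m choose i) * real a ^ i * (if c then q ^ (m - i) / real b ^ r else 0)) / real b ^ (m+1)"
proof (cases c)
  case False then show ?thesis by simp
next
  case True
  have bz: "real b ^ r \<noteq> 0" using bpos by simp
  have e1: "real (a * b ^ r + s) / real b ^ Suc r = (real a + q) / real b"
    unfolding q_def using bz bpos by (simp add: field_simps)
  have "(\<Sum>i\<le>m. real (m choose i) * real a ^ i * (q ^ (m - i) / real b ^ r)) = (real a + q) ^ m / real b ^ r"
    by (simp add: binomial_ring sum_divide_distrib mult.assoc)
  then show ?thesis using True bz bpos unfolding e1
    by (simp add: power_divide field_simps)
qed

lemma layer: "F j m (Suc r) = (\<Sum>a<b. \<Sum>i\<le>m. real (m choose i) * real a ^ i * V (\<lambda>j m. F j m r) j a (m - i)) / real b ^ (m+1)"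
proof -
  define q where "q s = real s / real b ^ r" for s
  have "F j m (Suc r) = (\<Sum>t<b * b^r. if pc b d (Suc r) t = j then (real t / real b ^ Suc r) ^ m / real b ^ Suc r else 0)"
    unfolding F_def by simp
  also have "\<dots> = (\<Sum>a<b. \<Sum>s<b^r. if pc b d (Suc r) (a * b^r + s) = j then (real (a * b^r + s) / real b ^ Suc r) ^ m / real b ^ Suc r else 0)"
    by (rule sum_group_mult)
  also have "\<dots> = (\<Sum>a<b. \<Sum>s<b^r. if (if a = d then 1 else 0) + pc b d r s = j then (real (a * b^r + s) / real b ^ Suc r) ^ m / real b ^ Suc r else 0)"
    by (intro sum.cong refl) (simp add: pc_lead del: pc.simps)
  also have "\<dots> = (\<Sum>a<b. \<Sum>s<b^r. (\<Sum>i\<le>m. real (m choose i) * real a ^ i * (if (if a = d then 1 else 0) + pc b d r s = j then q s ^ (m - i) / real b ^ r else 0)) / real b ^ (m+1))"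
    unfolding q_def by (intro sum.cong refl layer_point)
  also have "\<dots> = (\<Sum>a<b. \<Sum>i\<le>m. real (m choose i) * real a ^ i * (\<Sum>s<b^r. (if (if a = d then 1 else 0) + pc b d r s = j then q s ^ (m - i) / real b ^ r else 0))) / real b ^ (m+1)"
    by (simp add: sum_divide_distrib sum_distrib_left sum.swap[of _ "{..m}"])
  also have "\<dots> = (\<Sum>a<b. \<Sum>i\<le>m. real (m choose i) * real a ^ i * V (\<lambda>j m. F j m r) j a (m - i)) / real b ^ (m+1)"
    unfolding V_F q_def by simp
  finally show ?thesis .
qed

definition A :: "nat \<Rightarrow> nat \<Rightarrow> nat \<Rightarrow> real" where
  "A j m R = (\<Sum>r<R. F j m r)"

lemma A_rec: "real b ^ (m+1) * A j m (Suc R) = (if j = 0 \<and> m = 0 then real b ^ (m+1) else 0) +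
   (\<Sum>a<b. \<Sum>i\<le>m. real (m choose i) * real a ^ i * V (\<lambda>j m. A j m R) j a (m - i))"
proof -
  have bz: "real b ^ (m+1) \<noteq> 0" using bpos by simp
  have "A j m (Suc R) = F j m 0 + (\<Sum>r<R. F j m (Suc r))"
    unfolding A_def by (rule sum.lessThan_Suc_shift)
  also have "(\<Sum>r<R. F j m (Suc r)) = (\<Sum>r<R. \<Sum>a<b. \<Sum>i\<le>m. real (m choose i) * real a ^ i * V (\<lambda>j m. F j m r) j a (m - i)) / real b ^ (m+1)"
    unfolding layer by (simp add: sum_divide_distrib)
  also have "(\<Sum>r<R. \<Sum>a<b. \<Sum>i\<le>m. real (m choose i) * real a ^ i * V (\<lambda>j m. F j m r) j a (m - i))
     = (\<Sum>a<b. \<Sum>i\<le>m. real (m choose i) * real a ^ i * V (\<lambda>j m. A j m R) j a (m - i))"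
    unfolding A_def V_sum sum_distrib_left
    by (subst sum.swap, rule sum.cong[OF refl], subst sum.swap, simp)
  finally show ?thesis using bz unfolding F_0 by (simp add: field_simps)
qed

lemma A_le_u: "A j m R \<le> u_coef b d j m"
proof (induction R arbitrary: j m)
  case 0
  then show ?case by (simp add: A_def u_nonneg)
next
  case (Suc R)
  have "real b ^ (m+1) * A j m (Suc R) \<le> real b ^ (m+1) * u_coef b d j m"
    unfolding A_rec using E_u unfolding Erec_def
    apply (simp only:)
    apply (intro add_left_mono sum_mono mult_left_mono V_mono Suc.IH)
    apply auto
    done
  then show ?case using bpos by (simp add: mult_le_cancel_left_pos)
qed

lemma F_summable: "summable (F j m)"
  by (rule summableI_nonneg_bounded[where x="u_coef b d j m"])
     (auto simp: F_nonneg A_le_u[unfolded A_def])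

lemma A_lim: "(\<lambda>R. A j m R) \<longlonglongrightarrow> suminf (F j m)"
  unfolding A_def by (rule summable_LIMSEQ[OF F_summable])

lemma E_s: "Erec (\<lambda>j m. suminf (F j m))"
  unfolding Erec_def
proof (intro allI)
  fix j m
  have l1: "(\<lambda>R. real b ^ (m+1) * A j m (Suc R)) \<longlonglongrightarrow> real b ^ (m+1) * suminf (F j m)"
    by (intro tendsto_mult_left LIMSEQ_Suc A_lim)
  have lV: "(\<lambda>R. V (\<lambda>j m. A j m R) j a k) \<longlonglongrightarrow> V (\<lambda>j m. suminf (F j m)) j a k" for a k
    unfolding V_def by (auto intro: A_lim)
  have l2: "(\<lambda>R. (if j = 0 \<and> m = 0 then real b ^ (m+1) else 0) +
   (\<Sum>a<b. \<Sum>i\<le>m. real (m choose i) * real a ^ i * V (\<lambda>j m. A j m R) j a (m - i))) \<longlonglongrightarrow>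
      (if j = 0 \<and> m = 0 then real b ^ (m+1) else 0) +
   (\<Sum>a<b. \<Sum>i\<le>m. real (m choose i) * real a ^ i * V (\<lambda>j m. suminf (F j m)) j a (m - i))"
    by (intro tendsto_intros lV)
  show "real b ^ (m+1) * suminf (F j m) = (if j = 0 \<and> m = 0 then real b ^ (m+1) else 0) +
   (\<Sum>a<b. \<Sum>i\<le>m. real (m choose i) * real a ^ i * V (\<lambda>j m. suminf (F j m)) j a (m - i))"
    using LIMSEQ_unique[OF l1 l2[folded A_rec]] .
qed

lemma u_series: "u_coef b d j m = suminf (F j m)"
  by (rule Erec_unique[OF E_u E_s])

lemma u_sums: "F j m sums u_coef b d j m"
  unfolding u_series using F_summable by (rule summable_sums)

end

context irw
begin

lemma q_lt1: "t < b ^ r \<Longrightarrow> real t / real b ^ r < 1"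
  using bpos by (simp add: divide_less_eq)

lemma term_mono:
  assumes "t < b ^ r"
  shows "(real t / real b ^ r) ^ Suc m / real b ^ r \<le> (real t / real b ^ r) ^ m / real b ^ r"
    and "0 < (real t / real b ^ r) ^ m / real b ^ r \<Longrightarrow>
        (real t / real b ^ r) ^ Suc m / real b ^ r < (real t / real b ^ r) ^ m / real b ^ r"
proof -
  define q where "q = real t / real b ^ r"
  have q0: "0 \<le> q" unfolding q_def by simp
  have q1: "q < 1" unfolding q_def using q_lt1[OF assms] .
  have B: "0 < real b ^ r" using bpos by simp
  have "q * q ^ m \<le> 1 * q ^ m" using q0 q1 by (intro mult_right_mono) auto
  then show "(real t / real b ^ r) ^ Suc m / real b ^ r \<le> (real t / real b ^ r) ^ m / real b ^ r"
    unfolding q_def[symmetric] using B by (simp add: divide_right_mono)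
  assume "0 < (real t / real b ^ r) ^ m / real b ^ r"
  then have "0 < q ^ m" unfolding q_def[symmetric] using B by (simp add: zero_less_divide_iff)
  then have "q * q ^ m < 1 * q ^ m" using q1 by (intro mult_strict_right_mono) auto
  then show "(real t / real b ^ r) ^ Suc m / real b ^ r < (real t / real b ^ r) ^ m / real b ^ r"
    unfolding q_def[symmetric] using B by (simp add: divide_strict_right_mono)
qed

lemma F_mono: "F j (Suc m) r \<le> F j m r"
  unfolding F_def
proof (rule sum_mono)
  fix t assume "t \<in> {..<b^r}"
  then show "(if pc b d r t = j then (real t / real b ^ r) ^ Suc m / real b ^ r else 0)
     \<le> (if pc b d r t = j then (real t / real b ^ r) ^ m / real b ^ r else 0)"
    using term_mono(1)[of t r m] by simp
qed

lemma F_strict: "0 < F j m r \<Longrightarrow> F j (Suc m) r < F j m r"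
proof -
  assume pos: "0 < F j m r"
  let ?g = "\<lambda>k t. if pc b d r t = j then (real t / real b ^ r) ^ k / real b ^ r else 0"
  have "\<exists>t\<in>{..<b^r}. 0 < ?g m t"
  proof (rule ccontr)
    assume "\<not> ?thesis"
    then have "\<forall>t\<in>{..<b^r}. ?g m t \<le> 0" by (simp add: not_less)
    then have "(\<Sum>t<b^r. ?g m t) \<le> 0" by (intro sum_nonpos) blast
    then have "F j m r \<le> 0" unfolding F_def .
    with pos show False by simp
  qed
  then obtain t where t: "t < b^r" "0 < ?g m t" by auto
  have "0 < (\<Sum>s<b^r. ?g m s - ?g (Suc m) s)"
  proof (rule sum_pos2[where i=t])
    show "0 < ?g m t - ?g (Suc m) t" using t term_mono(2)[OF t(1)] by (auto split: if_splits)
  next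
    fix s assume "s \<in> {..<b^r}"
    then show "0 \<le> ?g m s - ?g (Suc m) s" using term_mono(1)[of s r m] by auto
  qed (use t in auto)
  then show ?thesis unfolding F_def by (simp add: sum_subtractf)
qed

lemma u_mono_m: "u_coef b d j (Suc m) \<le> u_coef b d j m"
  unfolding u_series by (intro suminf_le F_mono F_summable)

lemma u_strict_m: "u_coef b d j (Suc m) < u_coef b d j m \<or> (u_coef b d j (Suc m) = 0 \<and> u_coef b d j m = 0)"
proof (cases "u_coef b d j m = 0")
  case True
  then show ?thesis using u_mono_m[of j m] u_nonneg[of j "Suc m"] by simp
next
  case False
  then have "0 < suminf (F j m)" using u_nonneg[of j m] unfolding u_series by simp
  then obtain r where r: "0 < F j m r"
    using suminf_pos_iff[OF F_summable F_nonneg] by blast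
  have "0 < (\<Sum>r. F j m r - F j (Suc m) r)"
    using suminf_pos_iff[of "\<lambda>r. F j m r - F j (Suc m) r"] F_mono F_strict[OF r]
    by (auto intro!: summable_diff F_summable)
  then have "suminf (F j (Suc m)) < suminf (F j m)"
    using suminf_diff[OF F_summable F_summable, of j m j "Suc m"] by simp
  then show ?thesis unfolding u_series by simp
qed

lemma u_le_b: "u_coef b d j m \<le> real b"
proof (induction m)
  case 0 then show ?case by (simp add: u_j0)
next
  case (Suc m) then show ?case using u_mono_m[of j m] by simp
qed

lemma single_le_double:
  fixes a i m :: nat
  assumes "a < b" "i \<le> m" "\<And>a i. 0 \<le> f a i"
  shows "f a i \<le> (\<Sum>a<b. \<Sum>i\<le>m. (f a i :: real))"
proof -
  have "f a i \<le> (\<Sum>i\<le>m. f a i)" using assms by (intro member_le_sum) auto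
  also have "\<dots> \<le> (\<Sum>a<b. \<Sum>i\<le>m. f a i)" using assms by (intro member_le_sum sum_nonneg) auto
  finally show ?thesis .
qed

lemma V_u_nonneg: "0 \<le> V (u_coef b d) j a k"
  unfolding V_def by (simp add: u_nonneg)

lemma u_pos:
  assumes "1 \<le> m" "\<not> (j = 0 \<and> b = 2 \<and> d = 1)"
  shows "0 < u_coef b d j m"
proof -
  obtain a where a: "0 < a" "a < b" "V (u_coef b d) j a 0 = real b"
  proof (cases "j = 0")
    case True
    then have nb: "\<not> (b = 2 \<and> d = 1)" using assms by simp
    show ?thesis
    proof (cases "d = 1")
      case True
      then have "2 < b" using nb b2 by auto
      have "V (u_coef b d) j 2 0 = real b" unfolding V_def using True \<open>j = 0\<close> u_j0[of 0] by simp
      then show ?thesis using that[of 2] \<open>2 < b\<close> by simp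
    next
      case False
      then show ?thesis using that[of 1] b2 by (simp add: V_def u_j0)
    qed
  next
    case False
    then show ?thesis using that[of 1] b2 by (simp add: V_def u_j0)
  qed
  have "real (m choose m) * real a ^ m * V (u_coef b d) j a (m - m) \<le>
      (\<Sum>a<b. \<Sum>i\<le>m. real (m choose i) * real a ^ i * V (u_coef b d) j a (m - i))"
    by (rule single_le_double[where f="\<lambda>a i. real (m choose i) * real a ^ i * V (u_coef b d) j a (m - i)"])
       (use a in \<open>auto intro!: mult_nonneg_nonneg V_u_nonneg\<close>)
  also have "\<dots> = real b ^ (m+1) * u_coef b d j m"
  proof -
    have "real b ^ (m+1) * u_coef b d j m = (if j = 0 \<and> m = 0 then real b ^ (m+1) else 0) +
     (\<Sum>a<b. \<Sum>i\<le>m. real (m choose i) * real a ^ i * V (u_coef b d) j a (m - i))"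
      using E_u unfolding Erec_def by blast
    then show ?thesis using assms(1) by simp
  qed
  finally have "real a ^ m * real b \<le> real b ^ (m+1) * u_coef b d j m" using a by simp
  moreover have "0 < real a ^ m * real b" using a bpos by simp
  ultimately have "0 < real b ^ (m+1) * u_coef b d j m" by linarith
  then show ?thesis using u_nonneg[of j m] bpos by (simp add: zero_less_mult_iff)
qed

end

context irw
begin

abbreviation "DD m \<equiv> real b ^ (m+1) - real b + 1"

lemma u_step:
  assumes "1 \<le> m"
  shows "DD m * (u_coef b d (Suc j) m - u_coef b d j m) =
     (\<Sum>i=1..m. real (m choose i) * gamma_pow b d i * (u_coef b d (Suc j) (m - i) - u_coef b d j (m - i)))
     + ((\<Sum>i=0..m. real (m choose i) * real d ^ i * u_coef b d j (m - i))
        - (if j = 0 then 0 else (\<Sum>i=0..m. real (m choose i) * real d ^ i * u_coef b d (j - 1) (m - i))))"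
proof -
  have r1: "u_coef b d (Suc j) m * DD m = (\<Sum>i=1..m. real (m choose i) * gamma_pow b d i * u_coef b d (Suc j) (m - i))
     + (\<Sum>i=0..m. real (m choose i) * real d ^ i * u_coef b d j (m - i))"
    using u_rec[of "Suc j" m] by simp
  have r2: "u_coef b d j m * DD m = (\<Sum>i=1..m. real (m choose i) * gamma_pow b d i * u_coef b d j (m - i))
     + (if j = 0 then 0 else (\<Sum>i=0..m. real (m choose i) * real d ^ i * u_coef b d (j - 1) (m - i)))"
    using u_rec[of j m] assms by simp
  have "(\<Sum>i=1..m. real (m choose i) * gamma_pow b d i * (u_coef b d (Suc j) (m - i) - u_coef b d j (m - i)))
    = (\<Sum>i=1..m. real (m choose i) * gamma_pow b d i * u_coef b d (Suc j) (m - i)) -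
      (\<Sum>i=1..m. real (m choose i) * gamma_pow b d i * u_coef b d j (m - i))"
    by (simp add: sum_subtractf[symmetric] right_diff_distrib)
  then show ?thesis using r1 r2 by (simp add: algebra_simps)
qed

lemma w_pos_gen:
  assumes B: "\<And>m. 1 \<le> m \<Longrightarrow> 0 < (\<Sum>i=0..m. real (m choose i) * real d ^ i * u_coef b d j (m - i))
        - (if j = 0 then 0 else (\<Sum>i=0..m. real (m choose i) * real d ^ i * u_coef b d (j - 1) (m - i)))"
  shows "1 \<le> m \<Longrightarrow> u_coef b d j m < u_coef b d (Suc j) m"
proof (induction m rule: less_induct)
  case (less m)
  have nn: "0 \<le> real (m choose i) * gamma_pow b d i * (u_coef b d (Suc j) (m - i) - u_coef b d j (m - i))"
    if "i \<in> {1..m}" for i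
  proof -
    have "u_coef b d j (m - i) \<le> u_coef b d (Suc j) (m - i)"
    proof (cases "m - i = 0")
      case True then show ?thesis by (simp add: u_j0)
    next
      case False
      have "m - i < m" using that less.prems by auto
      then show ?thesis using less.IH[of "m - i"] False by force
    qed
    then show ?thesis by (intro mult_nonneg_nonneg gamma_nonneg) auto
  qed
  have "0 \<le> (\<Sum>i=1..m. real (m choose i) * gamma_pow b d i * (u_coef b d (Suc j) (m - i) - u_coef b d j (m - i)))"
    by (rule sum_nonneg) (rule nn)
  then have "0 < DD m * (u_coef b d (Suc j) m - u_coef b d j m)"
    unfolding u_step[OF less.prems]
    using B[OF less.prems] by linarith
  then show ?case using D_pos[of m] by (simp add: zero_less_mult_iff)
qed

lemma w_pos: "1 \<le> m \<Longrightarrow> u_coef b d j m < u_coef b d (Suc j) m"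
proof (induction j arbitrary: m)
  case 0
  show ?case
  proof (rule w_pos_gen[OF _ 0])
    fix m :: nat assume m: "1 \<le> m"
    have nn: "\<And>i. i \<in> {0..m} \<Longrightarrow> 0 \<le> real (m choose i) * real d ^ i * u_coef b d 0 (m - i)"
      by (simp add: u_nonneg)
    have "0 < (\<Sum>i=0..m. real (m choose i) * real d ^ i * u_coef b d 0 (m - i))"
    proof (cases "d = 0")
      case True
      have "0 < u_coef b d 0 m" using u_pos[OF m] True by simp
      then show ?thesis by (intro sum_pos2[where i=0]) (auto intro!: mult_nonneg_nonneg u_nonneg)
    next
      case False
      show ?thesis using False bpos
        by (intro sum_pos2[where i=m]) (auto simp: u_nonneg u_j0)
    qed
    then show "0 < (\<Sum>i=0..m. real (m choose i) * real d ^ i * u_coef b d 0 (m - i))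
        - (if 0 = (0::nat) then 0 else (\<Sum>i=0..m. real (m choose i) * real d ^ i * u_coef b d (0 - 1) (m - i)))"
      by simp
  qed
next
  case (Suc j)
  show ?case
  proof (rule w_pos_gen[OF _ Suc.prems])
    fix m :: nat assume m: "1 \<le> m"
    have mono: "u_coef b d j k \<le> u_coef b d (Suc j) k" for k
      using Suc.IH[of k] by (cases "k = 0") (auto simp: u_j0)
    have "0 < (\<Sum>i=0..m. real (m choose i) * real d ^ i * (u_coef b d (Suc j) (m - i) - u_coef b d j (m - i)))"
      using Suc.IH[OF m] mono
      by (intro sum_pos2[where i=0]) (auto intro!: mult_nonneg_nonneg)
    then show "0 < (\<Sum>i=0..m. real (m choose i) * real d ^ i * u_coef b d (Suc j) (m - i))
        - (if Suc j = 0 then 0 else (\<Sum>i=0..m. real (m choose i) * real d ^ i * u_coef b d (Suc j - 1) (m - i)))"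
      by (simp add: sum_subtractf[symmetric] right_diff_distrib)
  qed
qed

lemma u_incseq: "incseq (\<lambda>j. u_coef b d j m)"
proof (rule incseq_SucI)
  fix j show "u_coef b d j m \<le> u_coef b d (Suc j) m"
    using w_pos[of m j] by (cases "m = 0") (auto simp: u_j0)
qed

definition L :: "nat \<Rightarrow> real" where "L m = lim (\<lambda>j. u_coef b d j m)"

lemma L_lim: "(\<lambda>j. u_coef b d j m) \<longlonglongrightarrow> L m"
proof -
  obtain l where "(\<lambda>j. u_coef b d j m) \<longlonglongrightarrow> l"
    using incseq_convergent[OF u_incseq, where B="real b"] u_le_b by blast
  moreover from this have "L m = l" unfolding L_def by (rule limI)
  ultimately show ?thesis by simp
qed

lemma L_rec:
  assumes "1 \<le> m"
  shows "DD m * L m = (\<Sum>i=1..m. real (m choose i) * gamma_pow b d i * L (m - i))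
     + (\<Sum>i=0..m. real (m choose i) * real d ^ i * L (m - i))"
proof -
  have e: "DD m * u_coef b d (Suc j) m = (\<Sum>i=1..m. real (m choose i) * gamma_pow b d i * u_coef b d (Suc j) (m - i))
     + (\<Sum>i=0..m. real (m choose i) * real d ^ i * u_coef b d j (m - i))" for j
    using u_rec[of "Suc j" m] by (simp add: mult.commute)
  have l1: "(\<lambda>j. DD m * u_coef b d (Suc j) m) \<longlonglongrightarrow> DD m * L m"
    by (intro tendsto_mult_left LIMSEQ_Suc L_lim)
  have l2: "(\<lambda>j. (\<Sum>i=1..m. real (m choose i) * gamma_pow b d i * u_coef b d (Suc j) (m - i))
     + (\<Sum>i=0..m. real (m choose i) * real d ^ i * u_coef b d j (m - i))) \<longlonglongrightarrow>
     (\<Sum>i=1..m. real (m choose i) * gamma_pow b d i * L (m - i))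
     + (\<Sum>i=0..m. real (m choose i) * real d ^ i * L (m - i))"
    by (intro tendsto_intros LIMSEQ_Suc L_lim)
  show ?thesis using LIMSEQ_unique[OF l1 l2[folded e]] .
qed

lemma binom_frac:
  fixes x :: real
  shows "(\<Sum>i\<le>m. real (m choose i) * x ^ i / real (m + 1 - i)) = ((x + 1) ^ (m+1) - x ^ (m+1)) / real (m+1)"
proof -
  have c: "real (m choose i) / real (m + 1 - i) = real (Suc m choose i) / real (m+1)" if "i \<le> m" for i
  proof -
    have "(Suc m - i) * (Suc m choose i) = Suc m * (m choose i)"
      using binomial_absorb_comp[of "Suc m" i] by simp
    then have "real (Suc m - i) * real (Suc m choose i) = real (Suc m) * real (m choose i)"
      by (metis of_nat_mult)
    moreover have "real (Suc m - i) > 0" using that by simp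
    ultimately show ?thesis using that by (simp add: field_simps)
  qed
  have "(x + 1) ^ (m+1) = (\<Sum>i\<le>Suc m. real (Suc m choose i) * x ^ i)"
    using binomial_ring[of x 1 "Suc m"] by simp
  also have "\<dots> = (\<Sum>i\<le>m. real (Suc m choose i) * x ^ i) + x ^ (m+1)"
    by simp
  finally have s: "(\<Sum>i\<le>m. real (Suc m choose i) * x ^ i) = (x + 1) ^ (m+1) - x ^ (m+1)" by simp
  have "(\<Sum>i\<le>m. real (m choose i) * x ^ i / real (m + 1 - i)) = (\<Sum>i\<le>m. real (Suc m choose i) * x ^ i / real (m+1))"
  proof (rule sum.cong[OF refl])
    fix i assume "i \<in> {..m}"
    then have "real (m choose i) * x ^ i / real (m + 1 - i) = x ^ i * (real (m choose i) / real (m + 1 - i))"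
      by simp
    also have "\<dots> = real (Suc m choose i) * x ^ i / real (m+1)"
      using c[of i] \<open>i \<in> {..m}\<close> by simp
    finally show "real (m choose i) * x ^ i / real (m + 1 - i) = real (Suc m choose i) * x ^ i / real (m+1)" .
  qed
  also have "\<dots> = ((x + 1) ^ (m+1) - x ^ (m+1)) / real (m+1)"
    unfolding s[symmetric] by (simp add: sum_divide_distrib)
  finally show ?thesis .
qed

lemma sum_powers_split: "(\<Sum>a<b. real a ^ i) = real d ^ i + gamma_pow b d i"
proof -
  have "(\<Sum>a<b. real a ^ i) = (\<Sum>a<b. if a = d then real d ^ i else real a ^ i)"
    by (rule sum.cong) auto
  then show ?thesis unfolding sum_a_split gamma_pow_def by simp
qed

lemma ident:
  assumes "1 \<le> m"
  shows "DD m * (real b / real (m+1)) = (\<Sum>i=1..m. real (m choose i) * gamma_pow b d i * (real b / real (m - i + 1)))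
     + (\<Sum>i=0..m. real (m choose i) * real d ^ i * (real b / real (m - i + 1)))"
proof -
  have tel: "(\<Sum>a<b. ((real a + 1) ^ (m+1) - real a ^ (m+1))) = real b ^ (m+1)"
    using sum_lessThan_telescope[of "\<lambda>a. real a ^ (m+1)" b] by (simp add: add.commute)
  have "(\<Sum>i\<le>m. real (m choose i) * (real d ^ i + gamma_pow b d i) * (real b / real (m - i + 1)))
      = real b * (\<Sum>a<b. \<Sum>i\<le>m. real (m choose i) * real a ^ i / real (m + 1 - i))"
  proof -
    have "(\<Sum>i\<le>m. real (m choose i) * (real d ^ i + gamma_pow b d i) * (real b / real (m - i + 1)))
       = (\<Sum>i\<le>m. \<Sum>a<b. real b * (real (m choose i) * real a ^ i / real (m + 1 - i)))"
    proof (rule sum.cong[OF refl])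
      fix i assume i: "i \<in> {..m}"
      then have e: "m - i + 1 = m + 1 - i" by auto
      show "real (m choose i) * (real d ^ i + gamma_pow b d i) * (real b / real (m - i + 1)) =
         (\<Sum>a<b. real b * (real (m choose i) * real a ^ i / real (m + 1 - i)))"
        unfolding sum_powers_split[symmetric] e
        by (simp add: sum_distrib_left sum_distrib_right sum_divide_distrib mult_ac)
    qed
    also have "\<dots> = real b * (\<Sum>a<b. \<Sum>i\<le>m. real (m choose i) * real a ^ i / real (m + 1 - i))"
      by (subst sum.swap) (simp add: sum_distrib_left)
    finally show ?thesis .
  qed
  also have "\<dots> = real b * (real b ^ (m+1) / real (m+1))"
    unfolding binom_frac tel[symmetric] by (simp add: sum_divide_distrib)
  finally have S: "(\<Sum>i\<le>m. real (m choose i) * (real d ^ i + gamma_pow b d i) * (real b / real (m - i + 1)))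
      = real b * (real b ^ (m+1) / real (m+1))" .
  have sp: "(\<Sum>i\<le>m. real (m choose i) * (real d ^ i + gamma_pow b d i) * (real b / real (m - i + 1)))
     = (\<Sum>i=0..m. real (m choose i) * real d ^ i * (real b / real (m - i + 1)))
       + ((real b - 1) * (real b / real (m+1))
       + (\<Sum>i=1..m. real (m choose i) * gamma_pow b d i * (real b / real (m - i + 1))))"
  proof -
    have a1: "(\<Sum>i\<le>m. real (m choose i) * (real d ^ i + gamma_pow b d i) * (real b / real (m - i + 1)))
      = (\<Sum>i\<le>m. real (m choose i) * real d ^ i * (real b / real (m - i + 1)))
        + (\<Sum>i\<le>m. real (m choose i) * gamma_pow b d i * (real b / real (m - i + 1)))"
      by (simp add: sum.distrib[symmetric] algebra_simps)
    have a2: "(\<Sum>i\<le>m. real (m choose i) * gamma_pow b d i * (real b / real (m - i + 1)))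
       = (real b - 1) * (real b / real (m+1)) + (\<Sum>i=1..m. real (m choose i) * gamma_pow b d i * (real b / real (m - i + 1)))"
      by (subst split0) (simp add: gamma0)
    show ?thesis unfolding a1 a2 atLeast0AtMost by simp
  qed
  show ?thesis using S sp by (simp add: field_simps)
qed

lemma L_val: "L m = real b / real (m + 1)"
proof (induction m rule: less_induct)
  case (less m)
  show ?case
  proof (cases "m = 0")
    case True
    then show ?thesis using L_lim[of 0] LIMSEQ_unique[of "\<lambda>j. real b" "L 0" "real b"] by (simp add: u_j0)
  next
    case False
    then have m: "1 \<le> m" by simp
    have "(\<Sum>i=1..m. real (m choose i) * gamma_pow b d i * L (m - i))
        = (\<Sum>i=1..m. real (m choose i) * gamma_pow b d i * (real b / real (m - i + 1)))"
      by (rule sum.cong[OF refl]) (use less.IH in auto)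
    moreover have "(\<Sum>i=0..m. real (m choose i) * real d ^ i * L (m - i))
        = L m + (\<Sum>i=1..m. real (m choose i) * real d ^ i * (real b / real (m - i + 1)))"
      unfolding atLeast0AtMost split0 by (simp, rule sum.cong[OF refl]) (use less.IH in auto)
    moreover have "(\<Sum>i=0..m. real (m choose i) * real d ^ i * (real b / real (m - i + 1)))
        = real b / real (m+1) + (\<Sum>i=1..m. real (m choose i) * real d ^ i * (real b / real (m - i + 1)))"
      unfolding atLeast0AtMost split0 by simp
    ultimately have "DD m * L m - L m = DD m * (real b / real (m+1)) - real b / real (m+1)"
      using L_rec[OF m] ident[OF m] by simp
    then have z: "(DD m - 1) * (L m - real b / real (m+1)) = 0" by (simp add: algebra_simps)
    have p: "DD m - 1 > 0"
    proof -
      have "real b ^ m \<ge> real b" using power_increasing[of 1 m "real b"] m b2 by simp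
      then have "real b ^ (m+1) \<ge> real b * real b" using bpos by (simp add: mult_left_mono)
      moreover have "real b * real b > real b" using b2 by simp
      ultimately show ?thesis by simp
    qed
    have "DD m - 1 = 0 \<or> L m - real b / real (m+1) = 0" using z by (simp only: mult_eq_0_iff)
    then show ?thesis using p by (elim disjE) linarith+
  qed
qed

end

context irw
begin

lemma F_le_F0: "F j p r \<le> F j 0 r"
proof (induction p)
  case 0 then show ?case by simp
next
  case (Suc p) then show ?case using F_mono[of j p r] by simp
qed

lemma F_lim0: "(\<lambda>p. F j p r) \<longlonglongrightarrow> 0"
  unfolding F_def
proof (rule tendsto_null_sum)
  fix t assume t: "t \<in> {..<b^r}"
  have q: "norm (real t / real b ^ r) < 1" using q_lt1[of t r] t by simp
  show "(\<lambda>p. if pc b d r t = j then (real t / real b ^ r) ^ p / real b ^ r else 0) \<longlonglongrightarrow> 0"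
    by (cases "pc b d r t = j") (auto intro!: tendsto_divide_zero LIMSEQ_power_zero q)
qed

lemma u_lim0: "(\<lambda>p. u_coef b d j p) \<longlonglongrightarrow> 0"
proof -
  have "eventually (\<lambda>n. summable (\<lambda>k. norm (F j n k))) sequentially \<and>
           summable (\<lambda>n. norm ((\<lambda>r. 0::real) n)) \<and>
           ((\<lambda>n. suminf (\<lambda>k. F j n k)) \<longlongrightarrow> suminf (\<lambda>r. 0::real)) sequentially"
  proof (rule tannerys_theorem[where M="\<lambda>r. F j 0 r"])
    show "eventually (\<lambda>(k,n). norm (F j n k) \<le> F j 0 k) (at_top \<times>\<^sub>F sequentially)"
      by (rule always_eventually) (auto simp: F_nonneg F_le_F0)
  qed (auto intro: F_lim0 F_summable)
  then have "(\<lambda>n. suminf (F j n)) \<longlonglongrightarrow> 0" by simp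
  then show ?thesis unfolding u_series .
qed

definition G :: "nat \<Rightarrow> real \<Rightarrow> nat \<Rightarrow> real" where
  "G j x r = (\<Sum>t<b^r. if pc b d r t = j then 1 / (x * real b ^ r + real t) else 0)"

definition Rm :: "nat \<Rightarrow> real \<Rightarrow> nat \<Rightarrow> nat \<Rightarrow> real" where
  "Rm j x P r = (\<Sum>t<b^r. if pc b d r t = j then
      (- (real t / real b ^ r / x)) ^ P / (real b ^ r * (x + real t / real b ^ r)) else 0)"

lemma geo_point:
  fixes x q B :: real
  assumes x: "1 \<le> x" and q: "0 \<le> q" and B: "0 < B"
  shows "(\<Sum>p<P. (-1) ^ p * (q ^ p / B) / x ^ (p+1)) = 1 / (B * (x + q)) - (- (q / x)) ^ P / (B * (x + q))"
proof -
  define y where "y = - (q / x)"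
  have "0 \<le> q / x" using x q by simp
  then have y1: "y \<noteq> 1" unfolding y_def by linarith
  have t: "(-1) ^ p * (q ^ p / B) / x ^ (p+1) = y ^ p / (B * x)" for p
    unfolding y_def by (simp add: power_minus' power_divide field_simps)
  have "(\<Sum>p<P. (-1) ^ p * (q ^ p / B) / x ^ (p+1)) = (\<Sum>p<P. y ^ p) / (B * x)"
    unfolding t by (simp add: sum_divide_distrib)
  also have "\<dots> = (y ^ P - 1) / (y - 1) / (B * x)" using geometric_sum[OF y1] by simp
  also have "\<dots> = 1 / (B * (x + q)) - y ^ P / (B * (x + q))"
  proof -
    have x0: "x > 0" using x by simp
    have "y - 1 = - ((x + q) / x)" unfolding y_def using x0 by (simp add: field_simps)
    then have e: "(y - 1) * (B * x) = - (B * (x + q))" using x0 by (simp add: field_simps)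
    have "(y ^ P - 1) / (y - 1) / (B * x) = (y ^ P - 1) / ((y - 1) * (B * x))"
      by (simp add: divide_divide_eq_left)
    also have "\<dots> = (1 - y ^ P) / (B * (x + q))" unfolding e
      by (simp add: minus_divide_left del: divide_minus_left)
    also have "\<dots> = 1 / (B * (x + q)) - y ^ P / (B * (x + q))"
      by (simp add: diff_divide_distrib)
    finally show ?thesis .
  qed
  finally show ?thesis unfolding y_def .
qed

lemma partial_point:
  assumes x: "1 \<le> x"
  shows "(\<Sum>p<P. (-1) ^ p * F j p r / x ^ (p+1)) = G j x r - Rm j x P r"
proof -
  have B: "0 < real b ^ r" using bpos by simp
  have "(\<Sum>p<P. (-1) ^ p * F j p r / x ^ (p+1)) =
     (\<Sum>t<b^r. \<Sum>p<P. (-1) ^ p * (if pc b d r t = j then (real t / real b ^ r) ^ p / real b ^ r else 0) / x ^ (p+1))"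
    unfolding F_def by (subst sum.swap) (simp add: sum_distrib_left sum_divide_distrib)
  also have "\<dots> = (\<Sum>t<b^r. if pc b d r t = j then 1 / (x * real b ^ r + real t) -
      (- (real t / real b ^ r / x)) ^ P / (real b ^ r * (x + real t / real b ^ r)) else 0)"
  proof (rule sum.cong[OF refl])
    fix t
    have e: "real b ^ r * (x + real t / real b ^ r) = x * real b ^ r + real t"
      using B by (simp add: field_simps)
    show "(\<Sum>p<P. (-1) ^ p * (if pc b d r t = j then (real t / real b ^ r) ^ p / real b ^ r else 0) / x ^ (p+1))
      = (if pc b d r t = j then 1 / (x * real b ^ r + real t) -
      (- (real t / real b ^ r / x)) ^ P / (real b ^ r * (x + real t / real b ^ r)) else 0)"
      using geo_point[OF x _ B, of "real t / real b ^ r" P] e by simp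
  qed
  also have "\<dots> = G j x r - Rm j x P r"
    unfolding G_def Rm_def by (simp add: sum_subtractf[symmetric] if_distrib cong: if_cong)
  finally show ?thesis .
qed

lemma Rm_bound:
  assumes x: "1 \<le> x"
  shows "\<bar>Rm j x P r\<bar> \<le> F j P r"
proof -
  have B: "0 < real b ^ r" using bpos by simp
  have "\<bar>Rm j x P r\<bar> \<le> (\<Sum>t<b^r. \<bar>if pc b d r t = j then
      (- (real t / real b ^ r / x)) ^ P / (real b ^ r * (x + real t / real b ^ r)) else 0\<bar>)"
    unfolding Rm_def by (rule sum_abs)
  also have "\<dots> \<le> F j P r"
    unfolding F_def
  proof (rule sum_mono)
    fix t
    define q where "q = real t / real b ^ r"
    have q0: "0 \<le> q" unfolding q_def by simp
    have "\<bar>(- (q / x)) ^ P / (real b ^ r * (x + q))\<bar> = (q / x) ^ P / (real b ^ r * (x + q))"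
      using q0 x B by (simp add: power_abs abs_mult abs_divide)
    also have "\<dots> \<le> q ^ P / (real b ^ r * (x + q))"
      using q0 x B by (intro divide_right_mono power_mono) (auto simp: divide_le_eq mult_le_cancel_left1 intro: mult_nonneg_nonneg)
    also have "\<dots> \<le> q ^ P / real b ^ r"
      using q0 x B by (intro divide_left_mono) (auto simp: mult_le_cancel_left1 intro: mult_pos_pos)
    finally show "\<bar>if pc b d r t = j then (- (real t / real b ^ r / x)) ^ P / (real b ^ r * (x + real t / real b ^ r)) else 0\<bar>
       \<le> (if pc b d r t = j then (real t / real b ^ r) ^ P / real b ^ r else 0)"
      unfolding q_def by simp
  qed
  finally show ?thesis .
qed

lemma G_bound:
  assumes x: "1 \<le> x"
  shows "0 \<le> G j x r" "G j x r \<le> F j 0 r"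
proof -
  have B: "0 < real b ^ r" using bpos by simp
  show "0 \<le> G j x r" unfolding G_def using x B by (intro sum_nonneg) (auto intro: add_nonneg_nonneg)
  show "G j x r \<le> F j 0 r" unfolding G_def F_def
  proof (rule sum_mono)
    fix t
    have "1 * real b ^ r \<le> x * real b ^ r" by (rule mult_right_mono[OF x]) (use B in simp)
    then have le: "real b ^ r \<le> x * real b ^ r + real t" by simp
    have p2: "0 < x * real b ^ r + real t" using le B by linarith
    have "1 / (x * real b ^ r + real t) \<le> 1 / real b ^ r"
      by (rule divide_left_mono[OF le]) (use p2 B in auto)
    then show "(if pc b d r t = j then 1 / (x * real b ^ r + real t) else 0) \<le> (if pc b d r t = j then (real t / real b ^ r) ^ 0 / real b ^ r else 0)"
      by simp
  qed
qed

lemma G_summable: "1 \<le> (x::real) \<Longrightarrow> summable (G j x)"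
  by (rule summable_comparison_test[OF _ F_summable[of j 0]]) (use G_bound in auto)

lemma Rm_summable: "1 \<le> (x::real) \<Longrightarrow> summable (Rm j x P)"
  by (rule summable_comparison_test[OF _ F_summable[of j P]]) (use Rm_bound in auto)

lemma M1:
  assumes x: "1 \<le> (x::real)"
  shows "(\<lambda>p. (-1) ^ p * u_coef b d j p / x ^ (p+1)) sums suminf (G j x)"
  unfolding sums_def
proof -
  have eq: "(\<Sum>p<P. (-1) ^ p * u_coef b d j p / x ^ (p+1)) = suminf (G j x) - suminf (Rm j x P)" for P
  proof -
    have s: "(\<lambda>r. (-1) ^ p * F j p r / x ^ (p+1)) sums ((-1) ^ p * u_coef b d j p / x ^ (p+1))" for p
      using sums_divide[OF sums_mult[OF u_sums, where c="(-1)^p"], where c="x ^ (p+1)"] by simp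
    have "(\<lambda>r. \<Sum>p<P. (-1) ^ p * F j p r / x ^ (p+1)) sums (\<Sum>p<P. (-1) ^ p * u_coef b d j p / x ^ (p+1))"
      by (rule sums_sum) (rule s)
    moreover have "(\<lambda>r. \<Sum>p<P. (-1) ^ p * F j p r / x ^ (p+1)) sums (suminf (G j x) - suminf (Rm j x P))"
      unfolding partial_point[OF x]
      by (intro sums_diff summable_sums G_summable Rm_summable x)
    ultimately show ?thesis using sums_unique2 by blast
  qed
  have "(\<lambda>P. suminf (Rm j x P)) \<longlonglongrightarrow> 0"
  proof (rule Lim_null_comparison[OF _ u_lim0[of j]])
    show "\<forall>\<^sub>F P in sequentially. norm (suminf (Rm j x P)) \<le> u_coef b d j P"
    proof (rule always_eventually, rule allI)
      fix P
      have sa: "summable (\<lambda>r. \<bar>Rm j x P r\<bar>)"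
        by (rule summable_comparison_test[OF _ F_summable[of j P]]) (use Rm_bound[OF x] in auto)
      have "\<bar>suminf (Rm j x P)\<bar> \<le> (\<Sum>r. \<bar>Rm j x P r\<bar>)" by (rule summable_rabs[OF sa])
      also have "\<dots> \<le> suminf (F j P)"
        by (rule suminf_le[OF _ sa F_summable]) (rule Rm_bound[OF x])
      finally show "norm (suminf (Rm j x P)) \<le> u_coef b d j P" unfolding u_series by simp
    qed
  qed
  then have "(\<lambda>P. suminf (G j x) - suminf (Rm j x P)) \<longlonglongrightarrow> suminf (G j x) - 0"
    by (intro tendsto_diff tendsto_const)
  then show "(\<lambda>n. \<Sum>p<n. (-1) ^ p * u_coef b d j p / x ^ (p+1)) \<longlonglongrightarrow> suminf (G j x)"
    unfolding eq by simp
qed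

end

declare digit_count.simps[simp del]

lemma nonneg_sums_subseq:
  fixes f :: "nat \<Rightarrow> real"
  assumes f0: "\<And>n. 0 \<le> f n" and h: "strict_mono h"
    and lim: "(\<lambda>R. \<Sum>N<h R. f N) \<longlonglongrightarrow> S"
  shows "f sums S"
proof -
  have inc: "incseq (\<lambda>R. \<Sum>N<h R. f N)"
  proof (rule incseq_SucI)
    fix R
    have "h R \<le> h (Suc R)" using h by (simp add: strict_mono_less_eq)
    then show "(\<Sum>N<h R. f N) \<le> (\<Sum>N<h (Suc R). f N)"
      using f0 by (intro sum_mono2) auto
  qed
  have bnd: "(\<Sum>N<n. f N) \<le> S" for n
  proof -
    have "n \<le> h n" using h by (rule seq_suble)
    then have "(\<Sum>N<n. f N) \<le> (\<Sum>N<h n. f N)" using f0 by (intro sum_mono2) auto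
    also have "\<dots> \<le> S" using incseq_le[OF inc lim] .
    finally show ?thesis .
  qed
  have sm: "summable f" by (rule summableI_nonneg_bounded[OF f0 bnd])
  have "(\<lambda>n. \<Sum>N<n. f N) \<longlonglongrightarrow> suminf f" by (rule summable_LIMSEQ[OF sm])
  from LIMSEQ_subseq_LIMSEQ[OF this h] have "(\<lambda>R. \<Sum>N<h R. f N) \<longlonglongrightarrow> suminf f"
    by (simp add: o_def)
  with lim have "suminf f = S" using LIMSEQ_unique by blast
  then show ?thesis using sm by (simp add: sums_iff)
qed

lemma sums_drop0:
  fixes g :: "nat \<Rightarrow> real"
  assumes "g sums s"
  shows "(\<lambda>m. if m = 0 then 0 else g m) sums (s - g 0)"
proof -
  have "(\<lambda>n. g (Suc n)) sums (s - g 0)"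
    using assms sums_Suc_iff[of g "s - g 0"] by simp
  then show ?thesis
    using sums_Suc_iff[of "\<lambda>m. if m = 0 then 0 else g m" "s - g 0"] by simp
qed

lemma block_reindex:
  fixes g :: "nat \<Rightarrow> real"
  assumes "lo \<le> hi"
  shows "(\<Sum>N\<in>{lo*K..<hi*K}. g N) = (\<Sum>n\<in>{lo..<hi}. \<Sum>s<K. g (n*K + s))"
  using assms
proof (induction hi rule: dec_induct)
  case base then show ?case by simp
next
  case (step hi)
  have "(\<Sum>N\<in>{lo*K..<Suc hi*K}. g N) = (\<Sum>N\<in>{lo*K..<hi*K}. g N) + (\<Sum>N\<in>{hi*K..<hi*K+K}. g N)"
    using step.hyps by (simp add: sum.atLeastLessThan_concat[symmetric] add.commute)
  also have "(\<Sum>N\<in>{hi*K..<hi*K+K}. g N) = (\<Sum>s<K. g (hi*K + s))"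
  proof -
    have "(\<Sum>N\<in>{0+hi*K..<K+hi*K}. g N) = (\<Sum>s\<in>{0..<K}. g (s + hi*K))"
      by (rule sum.shift_bounds_nat_ivl)
    then show ?thesis by (simp add: atLeast0LessThan add.commute)
  qed
  finally show ?case using step.IH step.hyps by simp
qed

context irw
begin

lemma dc_step: "0 < N \<Longrightarrow> digit_count b d N = (if N mod b = d then 1 else 0) + digit_count b d (N div b)"
  using b2 digit_count.simps[of b d N] by simp

lemma dc_split: "0 < n \<Longrightarrow> t < b ^ r \<Longrightarrow> digit_count b d (n * b ^ r + t) = digit_count b d n + pc b d r t"
proof (induction r arbitrary: t)
  case 0 then show ?case by simp
next
  case (Suc r)
  have e: "n * b ^ Suc r + t = t + (n * b ^ r) * b" by (simp add: algebra_simps)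
  have m: "(n * b ^ Suc r + t) mod b = t mod b" unfolding e by (rule mod_mult_self1)
  have dv: "(n * b ^ Suc r + t) div b = n * b ^ r + t div b" unfolding e using bpos by simp
  have tb: "t div b < b ^ r" using Suc.prems bpos
    by (simp add: div_less_iff_less_mult mult.commute)
  have pos: "0 < n * b ^ Suc r + t" using Suc.prems bpos by simp
  show ?case unfolding dc_step[OF pos] m dv Suc.IH[OF Suc.prems(1) tb] by simp
qed

lemma main_sum:
  assumes l: "1 \<le> l"
  shows "(\<lambda>m. if m = 0 then 0
                 else (-1) ^ m * (\<Sum>n\<in>{n. b ^ (l - 1) \<le> n \<and> n < b ^ l \<and> digit_count b d n \<le> k}.
                          u_coef b d (k - digit_count b d n) m / real n ^ (m + 1)))
           sums (irwin_sum b d k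
                 - (\<Sum>n\<in>{n. 0 < n \<and> n < b ^ (l - 1) \<and> digit_count b d n = k}. 1 / real n)
                 - real b * (\<Sum>n\<in>{n. b ^ (l - 1) \<le> n \<and> n < b ^ l \<and> digit_count b d n \<le> k}. 1 / real n))"
proof -
  define lo where "lo = b ^ (l - 1)"
  define hi where "hi = b ^ l"
  define B' where "B' = {n. lo \<le> n \<and> n < hi \<and> digit_count b d n \<le> k}"
  define Low where "Low = {n. 0 < n \<and> n < lo \<and> digit_count b d n = k}"
  define T where "T n = suminf (G (k - digit_count b d n) (real n))" for n
  define f where "f N = (if 1 \<le> N \<and> digit_count b d N = k then 1 / real N else 0)" for N
  have hilo: "hi = lo * b" unfolding hi_def lo_def using l by (cases l) (auto simp: mult.commute)
  have lo1: "1 \<le> lo" unfolding lo_def using bpos by simp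
  have finB: "finite B'" unfolding B'_def by (rule finite_subset[of _ "{..<hi}"]) auto
  have B'n: "n \<in> B' \<Longrightarrow> 1 \<le> n" for n unfolding B'_def using lo1 by auto
  have block: "(\<Sum>N\<in>{lo*b^R..<hi*b^R}. f N) = (\<Sum>n\<in>B'. G (k - digit_count b d n) (real n) R)" for R
  proof -
    have "lo \<le> hi" unfolding hilo using b2 by simp
    then have "(\<Sum>N\<in>{lo*b^R..<hi*b^R}. f N) = (\<Sum>n\<in>{lo..<hi}. \<Sum>s<b^R. f (n*b^R + s))"
      by (rule block_reindex)
    also have "\<dots> = (\<Sum>n\<in>{lo..<hi}. if digit_count b d n \<le> k then G (k - digit_count b d n) (real n) R else 0)"
    proof (rule sum.cong[OF refl])
      fix n assume n: "n \<in> {lo..<hi}"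
      then have n0: "0 < n" using lo1 by auto
      have "(\<Sum>s<b^R. f (n*b^R + s)) = (\<Sum>s<b^R. if digit_count b d n \<le> k then
          (if pc b d R s = k - digit_count b d n then 1 / (real n * real b ^ R + real s) else 0) else 0)"
      proof (rule sum.cong[OF refl])
        fix s assume s: "s \<in> {..<b^R}"
        have "1 \<le> n * b ^ R + s" using n0 bpos by (simp add: Suc_le_eq)
        then show "f (n*b^R + s) = (if digit_count b d n \<le> k then
          (if pc b d R s = k - digit_count b d n then 1 / (real n * real b ^ R + real s) else 0) else 0)"
          unfolding f_def dc_split[OF n0 s[simplified]] by auto
      qed
      also have "\<dots> = (if digit_count b d n \<le> k then G (k - digit_count b d n) (real n) R else 0)"
        unfolding G_def by simp
      finally show "(\<Sum>s<b^R. f (n*b^R + s)) = (if digit_count b d n \<le> k then G (k - digit_count b d n) (real n) R else 0)" .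
    qed
    also have "\<dots> = (\<Sum>n\<in>B'. G (k - digit_count b d n) (real n) R)"
    proof -
      have eqB: "B' = {n \<in> {lo..<hi}. digit_count b d n \<le> k}" unfolding B'_def by auto
      show ?thesis unfolding eqB by (rule sum.inter_filter[symmetric]) simp
    qed
    finally show ?thesis .
  qed
  have Qstep: "(\<Sum>N<lo*b^(Suc R). f N) = (\<Sum>N<lo*b^R. f N) + (\<Sum>n\<in>B'. G (k - digit_count b d n) (real n) R)" for R
  proof -
    have le: "lo*b^R \<le> hi*b^R" unfolding hilo using b2 by simp
    have eq: "lo*b^(Suc R) = hi*b^R" unfolding hilo by (simp add: mult_ac)
    have "(\<Sum>N<lo*b^(Suc R). f N) = (\<Sum>N\<in>{0..<hi*b^R}. f N)" unfolding eq atLeast0LessThan ..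
    also have "\<dots> = (\<Sum>N\<in>{0..<lo*b^R}. f N) + (\<Sum>N\<in>{lo*b^R..<hi*b^R}. f N)"
      using le by (simp add: sum.atLeastLessThan_concat)
    finally show ?thesis unfolding block by (simp add: atLeast0LessThan)
  qed
  have Q0: "(\<Sum>N<lo*b^0. f N) = (\<Sum>n\<in>Low. 1 / real n)"
  proof -
    have eqL: "Low = {N \<in> {..<lo}. 1 \<le> N \<and> digit_count b d N = k}" unfolding Low_def by auto
    have "(\<Sum>N<lo*b^0. f N) = (\<Sum>N<lo. f N)" by simp
    also have "\<dots> = (\<Sum>n\<in>Low. 1 / real n)"
      unfolding f_def eqL by (rule sum.inter_filter[symmetric]) simp
    finally show ?thesis .
  qed
  have Qform: "(\<Sum>N<lo*b^R. f N) = (\<Sum>n\<in>Low. 1 / real n) + (\<Sum>r<R. \<Sum>n\<in>B'. G (k - digit_count b d n) (real n) r)" for R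
  proof (induction R)
    case 0 then show ?case using Q0 by simp
  next
    case (Suc R) then show ?case unfolding Qstep by simp
  qed
  have sG: "(\<lambda>r. \<Sum>n\<in>B'. G (k - digit_count b d n) (real n) r) sums (\<Sum>n\<in>B'. T n)"
    unfolding T_def by (rule sums_sum) (intro summable_sums G_summable, use B'n in simp)
  have Qlim: "(\<lambda>R. \<Sum>N<lo*b^R. f N) \<longlonglongrightarrow> (\<Sum>n\<in>Low. 1 / real n) + (\<Sum>n\<in>B'. T n)"
    unfolding Qform by (intro tendsto_add tendsto_const) (use sG in \<open>simp add: sums_def\<close>)
  have hmono: "strict_mono (\<lambda>R. lo * b ^ R)"
    unfolding strict_mono_Suc_iff using lo1 b2 by simp
  have fs: "f sums ((\<Sum>n\<in>Low. 1 / real n) + (\<Sum>n\<in>B'. T n))"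
    by (rule nonneg_sums_subseq[OF _ hmono Qlim]) (simp add: f_def)
  have irw_eq: "irwin_sum b d k = (\<Sum>n\<in>Low. 1 / real n) + (\<Sum>n\<in>B'. T n)"
    unfolding irwin_sum_def using fs unfolding f_def by (simp add: sums_iff)
  define \<phi> where "\<phi> m = (\<Sum>n\<in>B'. (-1) ^ m * u_coef b d (k - digit_count b d n) m / real n ^ (m + 1))" for m
  have sphi: "\<phi> sums (\<Sum>n\<in>B'. T n)"
    unfolding \<phi>_def T_def by (rule sums_sum) (rule M1, use B'n in simp)
  have phi0: "\<phi> 0 = real b * (\<Sum>n\<in>B'. 1 / real n)"
    unfolding \<phi>_def by (simp add: u_j0 sum_distrib_left)
  have "(\<lambda>m. if m = 0 then 0 else \<phi> m) sums ((\<Sum>n\<in>B'. T n) - real b * (\<Sum>n\<in>B'. 1 / real n))"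
    using sums_drop0[OF sphi] unfolding phi0 .
  moreover have "(\<lambda>m. if m = 0 then 0 else \<phi> m) = (\<lambda>m. if m = 0 then 0
                 else (-1) ^ m * (\<Sum>n\<in>B'. u_coef b d (k - digit_count b d n) m / real n ^ (m + 1)))"
    unfolding \<phi>_def by (rule ext) (simp add: sum_distrib_left cong: if_cong)
  ultimately show ?thesis unfolding irw_eq B'_def Low_def lo_def hi_def by simp
qed

end

theorem mainTheorem1:
  fixes b d :: nat
  assumes "2 \<le> b" and "d < b"
  shows "(\<forall>k l. 1 \<le> l \<longrightarrow>
           (\<lambda>m. if m = 0 then 0
                 else (-1) ^ m * (\<Sum>n\<in>{n. b ^ (l - 1) \<le> n \<and> n < b ^ l \<and> digit_count b d n \<le> k}.
                          u_coef b d (k - digit_count b d n) m / real n ^ (m + 1)))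
           sums (irwin_sum b d k
                 - (\<Sum>n\<in>{n. 0 < n \<and> n < b ^ (l - 1) \<and> digit_count b d n = k}. 1 / real n)
                 - real b * (\<Sum>n\<in>{n. b ^ (l - 1) \<le> n \<and> n < b ^ l \<and> digit_count b d n \<le> k}. 1 / real n)))
       \<and> (\<forall>j m. 1 \<le> m \<longrightarrow> 0 \<le> u_coef b d j m \<and>
                 (u_coef b d j m = 0 \<longrightarrow> j = 0 \<and> b = 2 \<and> d = 1))
       \<and> (\<forall>j m. u_coef b d j (m + 1) \<le> u_coef b d j m \<and>
                 (u_coef b d j (m + 1) < u_coef b d j m \<or>
                  (u_coef b d j (m + 1) = 0 \<and> u_coef b d j m = 0)))
       \<and> (\<forall>m. 1 \<le> m \<longrightarrow> strict_mono (\<lambda>j. u_coef b d j m) \<and>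
                 (\<lambda>j. u_coef b d j m) \<longlonglongrightarrow> real b / real (m + 1))"
proof -
  interpret irw b d using assms by unfold_locales
  have c1: "\<forall>k l. 1 \<le> l \<longrightarrow>
           (\<lambda>m. if m = 0 then 0
                 else (-1) ^ m * (\<Sum>n\<in>{n. b ^ (l - 1) \<le> n \<and> n < b ^ l \<and> digit_count b d n \<le> k}.
                          u_coef b d (k - digit_count b d n) m / real n ^ (m + 1)))
           sums (irwin_sum b d k
                 - (\<Sum>n\<in>{n. 0 < n \<and> n < b ^ (l - 1) \<and> digit_count b d n = k}. 1 / real n)
                 - real b * (\<Sum>n\<in>{n. b ^ (l - 1) \<le> n \<and> n < b ^ l \<and> digit_count b d n \<le> k}. 1 / real n))"
    using main_sum by blast
  have c2: "\<forall>j m. 1 \<le> m \<longrightarrow> 0 \<le> u_coef b d j m \<and>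
                 (u_coef b d j m = 0 \<longrightarrow> j = 0 \<and> b = 2 \<and> d = 1)"
  proof (intro allI impI)
    fix j m :: nat assume m: "1 \<le> m"
    show "0 \<le> u_coef b d j m \<and> (u_coef b d j m = 0 \<longrightarrow> j = 0 \<and> b = 2 \<and> d = 1)"
    proof (rule conjI)
      show "0 \<le> u_coef b d j m" by (rule u_nonneg)
    next
      show "u_coef b d j m = 0 \<longrightarrow> j = 0 \<and> b = 2 \<and> d = 1"
      proof
      assume z: "u_coef b d j m = 0"
      show "j = 0 \<and> b = 2 \<and> d = 1"
      proof (rule ccontr)
        assume "\<not> (j = 0 \<and> b = 2 \<and> d = 1)"
        then have "0 < u_coef b d j m" by (rule u_pos[OF m])
        with z show False by simp
      qed
      qed
    qed
  qed
  have c3: "\<forall>j m. u_coef b d j (m + 1) \<le> u_coef b d j m \<and>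
                 (u_coef b d j (m + 1) < u_coef b d j m \<or>
                  (u_coef b d j (m + 1) = 0 \<and> u_coef b d j m = 0))"
    using u_mono_m u_strict_m by simp
  have c4: "\<forall>m. 1 \<le> m \<longrightarrow> strict_mono (\<lambda>j. u_coef b d j m) \<and>
                 (\<lambda>j. u_coef b d j m) \<longlonglongrightarrow> real b / real (m + 1)"
  proof (intro allI impI conjI)
    fix m :: nat assume m: "1 \<le> m"
    show "strict_mono (\<lambda>j. u_coef b d j m)"
      unfolding strict_mono_Suc_iff using w_pos[OF m] by simp
    show "(\<lambda>j. u_coef b d j m) \<longlonglongrightarrow> real b / real (m + 1)"
      using L_lim[of m] unfolding L_val .
  qed
  show ?thesis using c1 c2 c3 c4 by blast
qed


end
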